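(* Let $w\in\mathcal C_b(E)$ and $\lambda\in\mathbb R$ satisfy the Bellman equation \[ w(x)=\sup_{\tau\in\mathcal T_{x,b}}\ln\mathbb E_x\Big[\exp\Big(\int_0^\tau (f(X_s)-\lambda)\,ds+Mw(X_\tau)\Big)\Big],\qquad x\in E. \] Then $\lambda\ge r(f)$.
   Context: $X=(X_t)_{t\ge0}$ is a standard Feller–Markov process on a filtered probability space, with values in a locally compact separable metric space $(E,\rho)$ with Borel $\sigma$-field $\mathcal E$; $\mathbb P_x,\mathbb E_x$ denote the law/expectation of $X$ started at $x$. $\mathcal C_b(E)$ is the space of bounded continuous real functions on $E$ with sup norm $\|\cdot\|$. $\mathcal T_{x,b}$ is the family of stopping times that are $\mathbb P_x$-a.s. bounded. $U\subseteq E$ is a fixed compact set. $f:E\to(-\infty,0]$ is continuous and bounded; $c:E\times U\to(-\infty,0]$ is continuous and bounded. The operator $M$ is $Mh(x):=\sup_{\xi\in U}(c(x,\xi)+h(\xi))$ for $h\in\mathcal C_b(E)$, $x\in E$. For bounded continuous $g$, $r(g):=\lim_{t\to\infty}\frac1t\ln\sup_{x\in E}\mathbb E_x\big[e^{\int_0^t g(X_s)ds}\big]$ (the limit exists). *)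

theory Defs
  imports "HOL-Probability.Probability"
begin

text \<open>Standard Feller--Markov process with state space 'e (Borel sigma-field),
  sample space the measurable space A, filtration F (indexed by real time),
  laws P x (started at x) and paths X t.\<close>

definition feller_markov ::
  "'w measure \<Rightarrow> (real \<Rightarrow> 'w measure) \<Rightarrow> ('e::{metric_space,second_countable_topology} \<Rightarrow> 'w measure)
    \<Rightarrow> (real \<Rightarrow> 'w \<Rightarrow> 'e) \<Rightarrow> bool" where
  "feller_markov A F P X \<longleftrightarrow>
     (\<forall>x. prob_space (P x) \<and> sets (P x) = sets A) \<and>
     filtration (space A) F \<and> (\<forall>t. sets (F t) \<subseteq> sets A) \<and>
     (\<forall>t\<ge>0. X t \<in> F t \<rightarrow>\<^sub>M borel) \<and>
     (\<forall>x. AE \<omega> in P x. X 0 \<omega> = x) \<and>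
     (\<forall>\<omega>\<in>space A. \<forall>t\<ge>0. continuous (at_right t) (\<lambda>s. X s \<omega>)) \<and>
     (\<forall>\<omega>\<in>space A. \<forall>t>0. \<exists>l. ((\<lambda>s. X s \<omega>) \<longlongrightarrow> l) (at_left t)) \<and>
     (\<forall>B\<in>sets A. (\<lambda>x. emeasure (P x) B) \<in> borel_measurable borel) \<and>
     (\<forall>t\<ge>0. \<forall>h::'e \<Rightarrow> real. continuous_on UNIV h \<and> bounded (range h) \<longrightarrow>
        continuous_on UNIV (\<lambda>x. \<integral>\<omega>. h (X t \<omega>) \<partial>P x)) \<and>
     (\<forall>x \<tau> s (h::'e \<Rightarrow> real). stopping_time F \<tau> \<and> (\<forall>\<omega>\<in>space A. 0 \<le> \<tau> \<omega>) \<and> 0 \<le> s \<and>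
        h \<in> borel_measurable borel \<and> bounded (range h) \<longrightarrow>
        (AE \<omega> in P x. real_cond_exp (P x) (filtration.pre_sigma (space A) F \<tau>)
                          (\<lambda>\<omega>. h (X (\<tau> \<omega> + s) \<omega>)) \<omega>
                       = (\<integral>\<omega>'. h (X s \<omega>') \<partial>P (X (\<tau> \<omega>) \<omega>)))) \<and>
     (\<forall>x (\<tau>n::nat \<Rightarrow> 'w \<Rightarrow> real) \<tau>.
        (\<forall>n. stopping_time F (\<tau>n n)) \<and> stopping_time F \<tau> \<and>
        (\<forall>\<omega>\<in>space A. \<forall>n. 0 \<le> \<tau>n n \<omega>) \<and>
        (\<forall>\<omega>\<in>space A. incseq (\<lambda>n. \<tau>n n \<omega>) \<and> (\<lambda>n. \<tau>n n \<omega>) \<longlonglongrightarrow> \<tau> \<omega>) \<longrightarrow>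
        (AE \<omega> in P x. (\<lambda>n. X (\<tau>n n \<omega>) \<omega>) \<longlonglongrightarrow> X (\<tau> \<omega>) \<omega>))"

definition bdd_stopping_times ::
  "'w measure \<Rightarrow> (real \<Rightarrow> 'w measure) \<Rightarrow> 'w measure \<Rightarrow> ('w \<Rightarrow> real) set" where
  "bdd_stopping_times A F Px =
     {\<tau>. stopping_time F \<tau> \<and> (\<forall>\<omega>\<in>space A. 0 \<le> \<tau> \<omega>) \<and> (\<exists>C. AE \<omega> in Px. \<tau> \<omega> \<le> C)}"

definition Mop :: "('e \<Rightarrow> 'e \<Rightarrow> real) \<Rightarrow> 'e set \<Rightarrow> ('e \<Rightarrow> real) \<Rightarrow> 'e \<Rightarrow> real" where
  "Mop c U h x = (SUP \<xi>\<in>U. c x \<xi> + h \<xi>)"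

definition growth_quot :: "('e \<Rightarrow> 'w measure) \<Rightarrow> (real \<Rightarrow> 'w \<Rightarrow> 'e) \<Rightarrow> ('e \<Rightarrow> real) \<Rightarrow> real \<Rightarrow> real" where
  "growth_quot P X g t =
     ln (SUP x. \<integral>\<omega>. exp (LINT s:{0..t}|lborel. g (X s \<omega>)) \<partial>P x) / t"

definition rate :: "('e \<Rightarrow> 'w measure) \<Rightarrow> (real \<Rightarrow> 'w \<Rightarrow> 'e) \<Rightarrow> ('e \<Rightarrow> real) \<Rightarrow> real" where
  "rate P X g = Lim at_top (growth_quot P X g)"

end

theory Submission
  imports Defs
begin

lemma X_meas:
  assumes proc: "feller_markov A F P X" and t: "t \<ge> 0"
  shows "X t \<in> borel_measurable A"
proof -
  have fil: "filtration (space A) F" and sub: "sets (F t) \<subseteq> sets A" and m: "X t \<in> F t \<rightarrow>\<^sub>M borel"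
    using proc t unfolding feller_markov_def by auto
  have "space (F t) = space A" using fil by (simp add: filtration.space_F)
  then have "subalgebra A (F t)" using sub by (simp add: subalgebra_def)
  then show ?thesis using m measurable_from_subalg by blast
qed

lemma right_seq:
  fixes g :: "real \<Rightarrow> 'e::metric_space"
  assumes "continuous (at_right u) g" "\<And>n. d n \<ge> u" "d \<longlonglongrightarrow> u"
  shows "(\<lambda>n. g (d n)) \<longlonglongrightarrow> g u"
proof -
  have "at u within {u..} = at_right u"
  proof -
    have e: "{u..} - {u} = {u<..} - {u}" by auto
    show ?thesis unfolding at_within_def e by simp
  qed
  then have "continuous (at u within {u..}) g" using assms(1) by simp
  then show ?thesis using assms(2,3) unfolding continuous_within_sequentially comp_def by auto
qed

lemma joint_meas:
  assumes proc: "feller_markov A F P X"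
  shows "(\<lambda>(\<omega>, s). X (max s (0::real)) \<omega>) \<in> borel_measurable (A \<Otimes>\<^sub>M lborel)"
proof (rule borel_measurable_LIMSEQ_metric)
  fix n :: nat
  define Y where "Y k = X (real k / real (Suc n))" for k :: nat
  have "(\<lambda>p. Y k (fst p)) \<in> borel_measurable (A \<Otimes>\<^sub>M lborel)" for k
    unfolding Y_def using X_meas[OF proc, of "real k / real (Suc n)"] by measurable
  moreover have "(\<lambda>p. nat \<lceil>real (Suc n) * max (snd p) 0\<rceil>) \<in> measurable (A \<Otimes>\<^sub>M lborel) (count_space UNIV)"
    by measurable
  ultimately have "(\<lambda>p. Y (nat \<lceil>real (Suc n) * max (snd p) 0\<rceil>) (fst p)) \<in> borel_measurable (A \<Otimes>\<^sub>M lborel)"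
    by (rule measurable_compose_countable)
  then show "(\<lambda>p. X (real (nat \<lceil>real (Suc n) * max (snd p) 0\<rceil>) / real (Suc n)) (fst p)) \<in> borel_measurable (A \<Otimes>\<^sub>M lborel)"
    unfolding Y_def by simp
next
  fix p :: "_ \<times> real" assume "p \<in> space (A \<Otimes>\<^sub>M lborel)"
  then obtain \<omega> s where p: "p = (\<omega>, s)" "\<omega> \<in> space A" by (auto simp: space_pair_measure)
  define u where "u = max s 0"
  have u0: "u \<ge> 0" by (simp add: u_def)
  have rc: "continuous (at_right u) (\<lambda>s. X s \<omega>)" using proc p(2) u0 unfolding feller_markov_def by auto
  define d where "d n = real (nat \<lceil>real (Suc n) * u\<rceil>) / real (Suc n)" for n :: nat
  have dge: "u \<le> d n" for n
  proof -
    have "real (Suc n) * u \<le> real (nat \<lceil>real (Suc n) * u\<rceil>)"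
      by (rule real_nat_ceiling_ge)
    then show ?thesis unfolding d_def by (simp add: field_simps)
  qed
  have dle: "d n \<le> u + 1 / real (Suc n)" for n
  proof -
    have "real (nat \<lceil>real (Suc n) * u\<rceil>) \<le> real (Suc n) * u + 1"
      using u0 by (simp add: of_nat_nat)
    then have "d n \<le> (real (Suc n) * u + 1) / real (Suc n)"
      unfolding d_def by (intro divide_right_mono) auto
    also have "\<dots> = u + 1 / real (Suc n)" by (simp add: field_simps)
    finally show ?thesis .
  qed
  have "d \<longlonglongrightarrow> u"
  proof (rule tendsto_sandwich[of "\<lambda>n. u" _ _ "\<lambda>n. u + 1 / real (Suc n)"])
    show "\<forall>\<^sub>F n in sequentially. u \<le> d n" using dge by simp
    show "\<forall>\<^sub>F n in sequentially. d n \<le> u + 1 / real (Suc n)" using dle by simp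
    show "(\<lambda>n. u + 1 / real (Suc n)) \<longlonglongrightarrow> u"
      using tendsto_add[OF tendsto_const LIMSEQ_inverse_real_of_nat] by (simp add: inverse_eq_divide)
  qed simp
  from right_seq[OF rc dge this]
  show "(\<lambda>n. X (real (nat \<lceil>real (Suc n) * max (snd p) 0\<rceil>) / real (Suc n)) (fst p)) \<longlonglongrightarrow> (case p of (\<omega>, s) \<Rightarrow> X (max s 0) \<omega>)"
    unfolding p d_def u_def by simp
qed



lemma Mop_meas:
  assumes c: "continuous_on (UNIV \<times> U) (\<lambda>(x, \<xi>). c x \<xi>)" and U: "U \<noteq> {}"
    and w: "continuous_on UNIV w"
    and bdd: "\<And>x. bdd_above ((\<lambda>\<xi>. c x \<xi> + w \<xi>) ` U)"
  shows "Mop c U w \<in> borel_measurable borel"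
proof (subst borel_measurable_iff_greater, intro allI)
  fix a :: real
  have iff: "a < Mop c U w x \<longleftrightarrow> (\<exists>\<xi>\<in>U. a < c x \<xi> + w \<xi>)" for x
    unfolding Mop_def by (rule less_cSUP_iff[OF U bdd])
  have eq: "{x \<in> space borel. a < Mop c U w x} = (\<Union>\<xi>\<in>U. {x. a < c x \<xi> + w \<xi>})"
    by (rule set_eqI) (simp add: iff space_borel)
  have "open {x. a < c x \<xi> + w \<xi>}" if "\<xi> \<in> U" for \<xi>
  proof -
    have "continuous_on UNIV (\<lambda>x. (\<lambda>(x, \<xi>). c x \<xi>) (x, \<xi>))"
      by (rule continuous_on_compose2[OF c continuous_on_Pair[OF continuous_on_id continuous_on_const]]) (auto simp: that)
    then have cc: "continuous_on UNIV (\<lambda>x. c x \<xi> + w \<xi>)"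
      by (intro continuous_on_add continuous_on_const) simp
    show ?thesis by (rule open_Collect_less[OF continuous_on_const cc])
  qed
  then have "open (\<Union>\<xi>\<in>U. {x. a < c x \<xi> + w \<xi>})" by (intro open_UN) blast
  then show "{x \<in> space borel. a < Mop c U w x} \<in> sets borel" unfolding eq by simp
qed

lemma integral_pos_prob:
  fixes h :: "_ \<Rightarrow> real"
  assumes "prob_space M" "integrable M h" "\<And>\<omega>. \<omega> \<in> space M \<Longrightarrow> 0 < h \<omega>"
  shows "0 < integral\<^sup>L M h"
proof -
  have nn: "AE \<omega> in M. 0 \<le> h \<omega>" by (intro AE_I2) (metis assms(3) less_imp_le)
  have "0 \<le> integral\<^sup>L M h" using nn by (rule integral_nonneg_AE)
  moreover have "integral\<^sup>L M h \<noteq> 0"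
  proof
    assume "integral\<^sup>L M h = 0"
    then have "AE \<omega> in M. h \<omega> = 0" using integral_nonneg_eq_0_iff_AE[OF assms(2) nn] by simp
    moreover have "AE \<omega> in M. h \<omega> = 0 \<longrightarrow> False" by (intro AE_I2) (metis assms(3) less_irrefl)
    ultimately have "AE \<omega> in M. False" by (rule AE_mp)
    then show False using prob_space.AE_False[OF assms(1)] by blast
  qed
  ultimately show ?thesis by simp
qed



theorem lemma2p1:
  fixes A :: "'w measure" and F :: "real \<Rightarrow> 'w measure"
    and P :: "'e::{metric_space,second_countable_topology} \<Rightarrow> 'w measure"
    and X :: "real \<Rightarrow> 'w \<Rightarrow> 'e"
    and U :: "'e set" and f :: "'e \<Rightarrow> real" and c :: "'e \<Rightarrow> 'e \<Rightarrow> real"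
    and w :: "'e \<Rightarrow> real" and lam :: real
  assumes E_lc: "locally_compact_space (euclidean :: 'e topology)"
    and proc: "feller_markov A F P X"
    and U: "compact U" "U \<noteq> {}"
    and f: "continuous_on UNIV f" "bounded (range f)" "\<forall>x. f x \<le> 0"
    and c: "continuous_on (UNIV \<times> U) (\<lambda>(x, \<xi>). c x \<xi>)" "bounded ((\<lambda>(x, \<xi>). c x \<xi>) ` (UNIV \<times> U))"
           "\<forall>x. \<forall>\<xi>\<in>U. c x \<xi> \<le> 0"
    and r_exists: "\<exists>L. (growth_quot P X f \<longlongrightarrow> L) at_top"
    and w: "continuous_on UNIV w" "bounded (range w)"
    and bellman: "\<forall>x. ereal (w x) =
        (SUP \<tau>\<in>bdd_stopping_times A F (P x).
           ereal (ln (\<integral>\<omega>. exp ((LINT s:{0..\<tau> \<omega>}|lborel. f (X s \<omega>) - lam)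
                               + Mop c U w (X (\<tau> \<omega>) \<omega>)) \<partial>P x)))"
  shows "lam \<ge> rate P X f"
proof -
  obtain Bf where Bf: "\<And>x. \<bar>f x\<bar> \<le> Bf" using f(2) unfolding bounded_iff by auto
  obtain Bc where Bc: "\<And>x \<xi>. \<xi> \<in> U \<Longrightarrow> \<bar>c x \<xi>\<bar> \<le> Bc" using c(2) unfolding bounded_iff by force
  obtain Bw where Bw: "\<And>x. \<bar>w x\<bar> \<le> Bw" using w(2) unfolding bounded_iff by auto
  define M where "M = Mop c U w"
  have bddM: "bdd_above ((\<lambda>\<xi>. c x \<xi> + w \<xi>) ` U)" for x
  proof (rule bdd_aboveI2)
    fix \<xi> assume "\<xi> \<in> U"
    then have "c x \<xi> \<le> 0" using c(3) by blast
    then show "c x \<xi> + w \<xi> \<le> Bw" using abs_le_D1[OF Bw[of \<xi>]] by linarith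
  qed
  have Mup: "M x \<le> Bw" for x
    unfolding M_def Mop_def
  proof (rule cSUP_least[OF U(2)])
    fix \<xi> assume "\<xi> \<in> U"
    then have "c x \<xi> \<le> 0" using c(3) by blast
    then show "c x \<xi> + w \<xi> \<le> Bw" using abs_le_D1[OF Bw[of \<xi>]] by linarith
  qed
  obtain \<xi>0 where \<xi>0: "\<xi>0 \<in> U" using U(2) by blast
  have Mlow: "- Bc - Bw \<le> M x" for x
  proof -
    have "c x \<xi>0 + w \<xi>0 \<le> M x" unfolding M_def Mop_def by (rule cSUP_upper[OF \<xi>0 bddM])
    moreover have "- Bc \<le> c x \<xi>0" using Bc[OF \<xi>0, of x] by linarith
    moreover have "- Bw \<le> w \<xi>0" using Bw[of \<xi>0] by linarith
    ultimately show ?thesis by linarith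
  qed
  have Mmeas: "M \<in> borel_measurable borel"
    unfolding M_def by (rule Mop_meas[OF c(1) U(2) w(1) bddM])
  have Pprob: "prob_space (P x)" and sets_P: "sets (P x) = sets A" for x
    using proc unfolding feller_markov_def by auto
  have space_P: "space (P x) = space A" for x using sets_eq_imp_space_eq[OF sets_P] .
  have JM: "(\<lambda>(\<omega>, s). X (max s (0::real)) \<omega>) \<in> borel_measurable (A \<Otimes>\<^sub>M lborel)"
    by (rule joint_meas[OF proc])
  have fmeas: "f \<in> borel_measurable borel" by (rule borel_measurable_continuous_onI[OF f(1)])
  define D where "D = Bc + 2 * Bw"

  have key: "growth_quot P X f t \<le> lam + D / t" if t: "t > 0" for t
  proof -
    define I where "I \<omega> = (LINT s:{0..t}|lborel. f (X s \<omega>))" for \<omega>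
    define J where "J \<omega> = (LINT s:{0..t}|lborel. f (X s \<omega>) - lam)" for \<omega>
    define I' where "I' \<omega> = (LINT s:{0..t}|lborel. f (X (max s 0) \<omega>))" for \<omega>
    have II': "I \<omega> = I' \<omega>" for \<omega> unfolding I_def I'_def by (rule set_lebesgue_integral_cong) auto
    have secm: "(\<lambda>s. f (X (max s 0) \<omega>)) \<in> borel_measurable lborel" if "\<omega> \<in> space A" for \<omega>
      using measurable_compose[OF measurable_Pair2[OF JM that] fmeas] by simp
    have si: "set_integrable lborel {0..t} (\<lambda>s. f (X (max s 0) \<omega>))" if "\<omega> \<in> space A" for \<omega>
    proof -
      have m: "(\<lambda>s. f (X (max s 0) \<omega>)) \<in> borel_measurable borel" using secm[OF that] by simp
      show ?thesis unfolding set_integrable_def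
        by (rule integrableI_bounded_set_indicator[where B=Bf]) (use m t in \<open>auto intro!: AE_I2 simp: Bf\<close>)
    qed
    have sc: "set_integrable lborel {0..t} (\<lambda>s. c0)" for c0 :: real
      unfolding set_integrable_def
      by (rule integrableI_bounded_set_indicator[where B="\<bar>c0\<bar>"]) (use t in \<open>auto intro!: AE_I2\<close>)
    have sconst: "(LINT s:{0..t}|lborel. c0) = t * c0" for c0 :: real
      using t by (subst set_integral_const) auto
    have Ieq: "J \<omega> = I \<omega> - lam * t" if \<omega>: "\<omega> \<in> space A" for \<omega>
    proof -
      have "J \<omega> = (LINT s:{0..t}|lborel. f (X (max s 0) \<omega>) - lam)"
        unfolding J_def by (rule set_lebesgue_integral_cong) auto
      also have "\<dots> = I' \<omega> - (LINT s:{0..t}|lborel. lam)"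
        unfolding I'_def by (rule set_integral_diff(2)[OF si[OF \<omega>] sc])
      finally show ?thesis using II' sconst by simp
    qed
    have Iup: "I \<omega> \<le> 0" if \<omega>: "\<omega> \<in> space A" for \<omega>
    proof -
      have "I' \<omega> \<le> (LINT s:{0..t}|lborel. (0::real))"
        unfolding I'_def by (rule set_integral_mono[OF si[OF \<omega>] sc]) (use f(3) in auto)
      then show ?thesis using II' sconst[of 0] by simp
    qed
    have Ilow: "- Bf * t \<le> I \<omega>" if \<omega>: "\<omega> \<in> space A" for \<omega>
    proof -
      have "(LINT s:{0..t}|lborel. - Bf) \<le> I' \<omega>"
        unfolding I'_def by (rule set_integral_mono[OF sc si[OF \<omega>]]) (smt (verit) Bf abs_le_D2)
      then show ?thesis using II' sconst[of "- Bf"] by (simp add: mult.commute)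
    qed
    have pm: "(\<lambda>(\<omega>, s). indicator {0..t} s *\<^sub>R f (X (max s 0) \<omega>)) \<in> borel_measurable (A \<Otimes>\<^sub>M lborel)"
    proof -
      have "(\<lambda>p. indicator {0..t} (snd p) :: real) \<in> borel_measurable (A \<Otimes>\<^sub>M lborel)"
        by (intro measurable_compose[OF measurable_snd] borel_measurable_indicator) simp
      moreover have "(\<lambda>p. f ((\<lambda>(\<omega>, s). X (max s (0::real)) \<omega>) p)) \<in> borel_measurable (A \<Otimes>\<^sub>M lborel)"
        by (rule measurable_compose[OF JM fmeas])
      ultimately have "(\<lambda>p. indicator {0..t} (snd p) * f ((\<lambda>(\<omega>, s). X (max s (0::real)) \<omega>) p)) \<in> borel_measurable (A \<Otimes>\<^sub>M lborel)"
        by (rule borel_measurable_times)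
      moreover have "(\<lambda>(\<omega>, s). indicator {0..t} s *\<^sub>R f (X (max s 0) \<omega>)) = (\<lambda>p. indicator {0..t} (snd p) * f ((\<lambda>(\<omega>, s). X (max s (0::real)) \<omega>) p))"
        by (rule ext) (simp add: split_beta)
      ultimately show ?thesis by (simp only:)
    qed
    have I'meas: "I' \<in> borel_measurable A"
      unfolding I'_def set_lebesgue_integral_def
      by (rule lborel.borel_measurable_lebesgue_integral[OF pm])
    have Ieqf: "I = I'" using II' by auto
    have Imeas: "I \<in> borel_measurable A" unfolding Ieqf by (rule I'meas)
    have Jmeas: "J \<in> borel_measurable A"
    proof -
      have m1: "(\<lambda>\<omega>. I \<omega> - lam * t) \<in> borel_measurable A"
        by (intro borel_measurable_diff Imeas borel_measurable_const)
      have "J \<in> borel_measurable A \<longleftrightarrow> (\<lambda>\<omega>. I \<omega> - lam * t) \<in> borel_measurable A"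
        by (rule measurable_cong) (rule Ieq)
      then show ?thesis using m1 by (simp only:)
    qed
    have Xt: "X t \<in> borel_measurable A" using X_meas[OF proc] t by simp
    have MX: "(\<lambda>\<omega>. M (X t \<omega>)) \<in> borel_measurable A" by (rule measurable_compose[OF Xt Mmeas])
    define g where "g \<omega> = exp (I \<omega>)" for \<omega>
    define h where "h \<omega> = exp (J \<omega> + M (X t \<omega>))" for \<omega>
    have gmA: "g \<in> borel_measurable A" unfolding g_def by (rule measurable_compose[OF Imeas borel_measurable_exp])
    have hmA: "h \<in> borel_measurable A" unfolding h_def by (rule measurable_compose[OF borel_measurable_add[OF Jmeas MX] borel_measurable_exp])
    have gm: "g \<in> borel_measurable (P x)" and hm: "h \<in> borel_measurable (P x)" for x
    proof -
      have mc: "measurable (P x) borel = measurable A (borel :: real measure)"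
        by (rule measurable_cong_sets[OF sets_P refl])
      show "g \<in> borel_measurable (P x)" using gmA mc by (simp only:)
      show "h \<in> borel_measurable (P x)" using hmA mc by (simp only:)
    qed
    define E where "E = exp (lam * t + D)"
    have gx: "integral\<^sup>L (P x) g \<le> E \<and> 0 < integral\<^sup>L (P x) g" for x
    proof -
      interpret Px: prob_space "P x" by (rule Pprob)
      have gpos: "0 < g \<omega>" for \<omega> unfolding g_def by simp
      have hpos: "0 < h \<omega>" for \<omega> unfolding h_def by simp
      have gint: "integrable (P x) g"
      proof (rule Px.integrable_const_bound[where B=1])
        show "AE \<omega> in P x. norm (g \<omega>) \<le> 1"
        proof (rule AE_I2)
          fix \<omega> assume "\<omega> \<in> space (P x)"
          then have "\<omega> \<in> space A" by (simp only: space_P)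
          then have "I \<omega> \<le> 0" by (rule Iup)
          then show "norm (g \<omega>) \<le> 1" unfolding g_def by simp
        qed
      qed (rule gm)
      have hint: "integrable (P x) h"
      proof (rule Px.integrable_const_bound[where B="exp (\<bar>lam\<bar> * t + Bw)"])
        show "AE \<omega> in P x. norm (h \<omega>) \<le> exp (\<bar>lam\<bar> * t + Bw)"
        proof (rule AE_I2)
          fix \<omega> assume "\<omega> \<in> space (P x)"
          then have \<omega>: "\<omega> \<in> space A" by (simp only: space_P)
          have l: "- lam * t \<le> \<bar>lam\<bar> * t" using t by (intro mult_right_mono) auto
          have "J \<omega> + M (X t \<omega>) \<le> \<bar>lam\<bar> * t + Bw"
            using Ieq[OF \<omega>] Iup[OF \<omega>] Mup[of "X t \<omega>"] l by linarith
          then show "norm (h \<omega>) \<le> exp (\<bar>lam\<bar> * t + Bw)" unfolding h_def by simp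
        qed
      qed (rule hm)
      have pw: "g \<omega> \<le> exp (lam * t + Bc + Bw) * h \<omega>" if \<omega>: "\<omega> \<in> space (P x)" for \<omega>
      proof -
        have \<omega>A: "\<omega> \<in> space A" using \<omega> by (simp only: space_P)
        have "I \<omega> \<le> lam * t + Bc + Bw + (J \<omega> + M (X t \<omega>))"
          using Ieq[OF \<omega>A] Mlow[of "X t \<omega>"] by linarith
        then have "exp (I \<omega>) \<le> exp (lam * t + Bc + Bw + (J \<omega> + M (X t \<omega>)))" by simp
        also have "\<dots> = exp (lam * t + Bc + Bw) * h \<omega>" unfolding h_def by (rule exp_add)
        finally show ?thesis unfolding g_def .
      qed
      have "integral\<^sup>L (P x) g \<le> integral\<^sup>L (P x) (\<lambda>\<omega>. exp (lam * t + Bc + Bw) * h \<omega>)"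
        by (rule integral_mono[OF gint integrable_mult_right[OF hint] pw])
      also have "\<dots> = exp (lam * t + Bc + Bw) * integral\<^sup>L (P x) h" by (rule integral_mult_right_zero)
      finally have g1: "integral\<^sup>L (P x) g \<le> exp (lam * t + Bc + Bw) * integral\<^sup>L (P x) h" .
      have tau: "(\<lambda>_. t) \<in> bdd_stopping_times A F (P x)"
        unfolding bdd_stopping_times_def using t by (auto intro!: stopping_time_const)
      have "ereal (ln (integral\<^sup>L (P x) h))
          = (\<lambda>\<tau>. ereal (ln (\<integral>\<omega>. exp ((LINT s:{0..\<tau> \<omega>}|lborel. f (X s \<omega>) - lam)
                               + Mop c U w (X (\<tau> \<omega>) \<omega>)) \<partial>P x))) (\<lambda>_. t)"
        unfolding h_def J_def M_def by simp
      also have "\<dots> \<le> (SUP \<tau>\<in>bdd_stopping_times A F (P x).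
           ereal (ln (\<integral>\<omega>. exp ((LINT s:{0..\<tau> \<omega>}|lborel. f (X s \<omega>) - lam)
                               + Mop c U w (X (\<tau> \<omega>) \<omega>)) \<partial>P x)))"
        by (rule SUP_upper[OF tau])
      also have "\<dots> = ereal (w x)" using bellman by simp
      finally have "ln (integral\<^sup>L (P x) h) \<le> w x" by simp
      then have lnh: "ln (integral\<^sup>L (P x) h) \<le> Bw" using Bw[of x] by linarith
      have hpos': "0 < integral\<^sup>L (P x) h"
        by (rule integral_pos_prob[OF Pprob hint hpos])
      have "integral\<^sup>L (P x) h \<le> exp Bw"
        using lnh hpos' by (metis exp_ln exp_le_cancel_iff)
      then have "integral\<^sup>L (P x) g \<le> exp (lam * t + Bc + Bw) * exp Bw"
        using g1 by (meson exp_gt_zero less_imp_le mult_left_mono order_trans)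
      also have "\<dots> = E" unfolding E_def D_def exp_add[symmetric] by (rule arg_cong[where f=exp]) linarith
      finally show ?thesis using integral_pos_prob[OF Pprob gint gpos] by simp
    qed
    define S where "S = (SUP x. integral\<^sup>L (P x) g)"
    have gq: "growth_quot P X f t = ln S / t"
      unfolding growth_quot_def S_def g_def I_def by simp
    have bdd: "bdd_above (range (\<lambda>x. integral\<^sup>L (P x) g))"
      using gx by (intro bdd_aboveI2[where M=E]) auto
    have SE: "S \<le> E" unfolding S_def using gx by (intro cSUP_least) auto
    have Spos: "0 < S"
    proof -
      have "integral\<^sup>L (P undefined) g \<le> S" unfolding S_def by (rule cSUP_upper[OF _ bdd]) simp
      then show ?thesis using gx[of undefined] by linarith
    qed
    have "ln S \<le> ln E" using SE Spos by simp
    also have "\<dots> = lam * t + D" unfolding E_def by simp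
    finally have "ln S / t \<le> (lam * t + D) / t" using t by (simp add: divide_right_mono)
    also have "\<dots> = lam + D / t" using t by (simp add: field_simps)
    finally show ?thesis using gq by simp
  qed
  obtain L where L: "(growth_quot P X f \<longlongrightarrow> L) at_top" using r_exists by blast
  have rate: "rate P X f = L" unfolding rate_def by (rule tendsto_Lim[OF _ L]) simp
  have lim2: "((\<lambda>t. lam + D / t) \<longlongrightarrow> lam + 0) at_top"
    by (intro tendsto_add tendsto_const tendsto_divide_0[OF tendsto_const]
        filterlim_at_top_imp_at_infinity filterlim_ident)
  have ev: "eventually (\<lambda>t. growth_quot P X f t \<le> lam + D / t) at_top"
    using eventually_gt_at_top[of 0] by eventually_elim (rule key)
  have "L \<le> lam + 0" by (rule tendsto_le[OF _ lim2 L ev]) simp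
  then show ?thesis using rate by simp
qed


end
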